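(* Let $(T,\sigma)$ be a leaf-colored tree in which every inner vertex has exactly two children. Then for any three distinct colors $r,s,t$, no connected component of the subgraph of $G(T,\sigma)$ induced by the vertices of colors $r,s,t$ is of Type (C); that is, no such component contains an induced $6$-cycle in which any three consecutive vertices have pairwise distinct colors.
   Context: A planted phylogenetic tree $T$ is a rooted tree with distinguished root $0_T$ of degree $1$, all other non-leaf vertices of degree $\ge3$; $L(T)$ its leaves (excluding $0_T$), $|L(T)|\ge2$. $\preceq_T$ is the ancestor order towards $0_T$; $\mathrm{child}(v)$, $\mathrm{lca}_T$ as usual. $\sigma$ maps $L(T)$ to a set of colors. $y$ is a best match of $x$ if $\sigma(x)\ne\sigma(y)$ and $\mathrm{lca}_T(x,y)\preceq_T\mathrm{lca}_T(x,y')$ for all $y'$ with $\sigma(y')=\sigma(y)$. The RBMG $G(T,\sigma)$ is the vertex-colored undirected graph on $L(T)$ whose edges are the reciprocal best match pairs. A connected component of a 3-colored induced subgraph is of Type (C) if it contains an induced cycle on six vertices such that any three consecutive vertices of the cycle have pairwise distinct colors. *)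

theory Defs
  imports Main
begin

definition anc :: "('v \<Rightarrow> 'v) \<Rightarrow> 'v \<Rightarrow> 'v \<Rightarrow> bool" where
  "anc par x y \<longleftrightarrow> (\<exists>n. (par ^^ n) x = y)"
  \<comment> \<open>x \<preceq>_T y: y lies on the path from x to the root (y is an ancestor of x or y = x)\<close>

definition children :: "'v set \<Rightarrow> 'v \<Rightarrow> ('v \<Rightarrow> 'v) \<Rightarrow> 'v \<Rightarrow> 'v set" where
  "children V rt par v = {u \<in> V. u \<noteq> rt \<and> par u = v}"

definition leaves :: "'v set \<Rightarrow> 'v \<Rightarrow> ('v \<Rightarrow> 'v) \<Rightarrow> 'v set" where
  "leaves V rt par = {v \<in> V. v \<noteq> rt \<and> children V rt par v = {}}"

definition rooted_tree :: "'v set \<Rightarrow> 'v \<Rightarrow> ('v \<Rightarrow> 'v) \<Rightarrow> bool" where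
  "rooted_tree V rt par \<longleftrightarrow> finite V \<and> rt \<in> V \<and> par rt = rt \<and>
     (\<forall>v\<in>V. par v \<in> V) \<and> (\<forall>v\<in>V. anc par v rt)"

text \<open>Planted phylogenetic tree: root has degree 1 (exactly one child), every other
  non-leaf vertex has degree \<ge> 3 (at least two children), at least two leaves.\<close>
definition planted_phylo_tree :: "'v set \<Rightarrow> 'v \<Rightarrow> ('v \<Rightarrow> 'v) \<Rightarrow> bool" where
  "planted_phylo_tree V rt par \<longleftrightarrow> rooted_tree V rt par \<and>
     card (children V rt par rt) = 1 \<and>
     (\<forall>v\<in>V. v \<noteq> rt \<and> v \<notin> leaves V rt par \<longrightarrow> card (children V rt par v) \<ge> 2) \<and>
     card (leaves V rt par) \<ge> 2"

definition inner_vertices :: "'v set \<Rightarrow> 'v \<Rightarrow> ('v \<Rightarrow> 'v) \<Rightarrow> 'v set" where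
  "inner_vertices V rt par = {v \<in> V. v \<noteq> rt \<and> v \<notin> leaves V rt par}"

definition lca :: "'v set \<Rightarrow> ('v \<Rightarrow> 'v) \<Rightarrow> 'v \<Rightarrow> 'v \<Rightarrow> 'v" where
  "lca V par x y = (THE z. z \<in> V \<and> anc par x z \<and> anc par y z \<and>
      (\<forall>w\<in>V. anc par x w \<and> anc par y w \<longrightarrow> anc par z w))"

definition best_match :: "'v set \<Rightarrow> 'v \<Rightarrow> ('v \<Rightarrow> 'v) \<Rightarrow> ('v \<Rightarrow> 'c) \<Rightarrow> 'v \<Rightarrow> 'v \<Rightarrow> bool" where
  "best_match V rt par \<sigma> x y \<longleftrightarrow> x \<in> leaves V rt par \<and> y \<in> leaves V rt par \<and> \<sigma> x \<noteq> \<sigma> y \<and>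
     (\<forall>y'\<in>leaves V rt par. \<sigma> y' = \<sigma> y \<longrightarrow> anc par (lca V par x y) (lca V par x y'))"

definition rbmg_edge :: "'v set \<Rightarrow> 'v \<Rightarrow> ('v \<Rightarrow> 'v) \<Rightarrow> ('v \<Rightarrow> 'c) \<Rightarrow> 'v \<Rightarrow> 'v \<Rightarrow> bool" where
  "rbmg_edge V rt par \<sigma> x y \<longleftrightarrow> best_match V rt par \<sigma> x y \<and> best_match V rt par \<sigma> y x"

definition col_verts :: "'v set \<Rightarrow> 'v \<Rightarrow> ('v \<Rightarrow> 'v) \<Rightarrow> ('v \<Rightarrow> 'c) \<Rightarrow> 'c set \<Rightarrow> 'v set" where
  "col_verts V rt par \<sigma> S = {x \<in> leaves V rt par. \<sigma> x \<in> S}"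

definition component :: "('v \<Rightarrow> 'v \<Rightarrow> bool) \<Rightarrow> 'v set \<Rightarrow> 'v \<Rightarrow> 'v set" where
  "component E H x = {y. (x, y) \<in> ({(a, b). a \<in> H \<and> b \<in> H \<and> E a b})\<^sup>*}"

definition is_component :: "('v \<Rightarrow> 'v \<Rightarrow> bool) \<Rightarrow> 'v set \<Rightarrow> 'v set \<Rightarrow> bool" where
  "is_component E H C \<longleftrightarrow> (\<exists>x\<in>H. C = component E H x)"

definition typeC :: "('v \<Rightarrow> 'v \<Rightarrow> bool) \<Rightarrow> ('v \<Rightarrow> 'c) \<Rightarrow> 'v set \<Rightarrow> bool" where
  "typeC E \<sigma> C \<longleftrightarrow> (\<exists>v :: nat \<Rightarrow> 'v.
     (\<forall>i<6. v i \<in> C) \<and> inj_on v {0..<6} \<and>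
     (\<forall>i<6. \<forall>j<6. E (v i) (v j) \<longleftrightarrow> (j = (i + 1) mod 6 \<or> i = (j + 1) mod 6)) \<and>
     (\<forall>i<6. \<sigma> (v i) \<noteq> \<sigma> (v ((i + 1) mod 6)) \<and> \<sigma> (v i) \<noteq> \<sigma> (v ((i + 2) mod 6)) \<and>
            \<sigma> (v ((i + 1) mod 6)) \<noteq> \<sigma> (v ((i + 2) mod 6))))"

end

theory Submission
  imports Defs
begin

locale rtree =
  fixes V :: "'v set" and rt :: 'v and par :: "'v \<Rightarrow> 'v"
  assumes rtr: "rooted_tree V rt par"
begin

lemma finV: "finite V" and rtV: "rt \<in> V" and par_rt: "par rt = rt"
  and parV: "v \<in> V \<Longrightarrow> par v \<in> V" and reach: "v \<in> V \<Longrightarrow> anc par v rt"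
  using rtr unfolding rooted_tree_def by auto

lemma iterV: "x \<in> V \<Longrightarrow> (par ^^ n) x \<in> V"
  by (induction n) (auto intro: parV)

lemma ancV: "x \<in> V \<Longrightarrow> anc par x y \<Longrightarrow> y \<in> V"
  unfolding anc_def using iterV by blast

lemma anc_refl: "anc par x x"
  unfolding anc_def by (metis funpow_0)

lemma anc_par: "anc par x (par x)"
  unfolding anc_def by (metis funpow_0 funpow.simps(2) comp_apply)

lemma anc_trans: "anc par a b \<Longrightarrow> anc par b c \<Longrightarrow> anc par a c"
  unfolding anc_def by (metis comp_apply funpow_add)

lemma rt_iter: "(par ^^ n) rt = rt"
  by (induction n) (auto simp: par_rt)

lemma fix_iter: "par v = v \<Longrightarrow> (par ^^ n) v = v"
  by (induction n) auto

lemma fix_rt: "v \<in> V \<Longrightarrow> par v = v \<Longrightarrow> v = rt"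
  using reach[of v] fix_iter[of v] unfolding anc_def by metis

lemma per_iter: "(par ^^ p) a = a \<Longrightarrow> (par ^^ (k * p)) a = a"
proof (induction k)
  case 0 then show ?case by simp
next
  case (Suc k)
  have "(par ^^ (Suc k * p)) a = (par ^^ p) ((par ^^ (k * p)) a)"
    by (simp add: funpow_add)
  then show ?case using Suc by simp
qed

lemma antisym: assumes "a \<in> V" "anc par a b" "anc par b a" shows "a = b"
proof -
  obtain n m where n: "(par ^^ n) a = b" and m: "(par ^^ m) b = a"
    using assms unfolding anc_def by blast
  have per: "(par ^^ (m + n)) a = a" using n m by (simp add: funpow_add)
  show ?thesis
  proof (cases "m + n = 0")
    case True then show ?thesis using n by simp
  next
    case False
    obtain j where j: "(par ^^ j) a = rt" using reach[OF assms(1)] unfolding anc_def by blast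
    have "j * (m + n) \<ge> j" using False by (cases "m + n") auto
    then obtain d where d: "j * (m + n) = d + j" by (metis le_add_diff_inverse2)
    have "(par ^^ (j * (m + n))) a = a" using per_iter[OF per] .
    moreover have "(par ^^ (d + j)) a = rt" using j rt_iter by (simp add: funpow_add)
    ultimately have "a = rt" using d by simp
    then show ?thesis using n rt_iter by simp
  qed
qed

lemma chain: "anc par x a \<Longrightarrow> anc par x b \<Longrightarrow> anc par a b \<or> anc par b a"
proof -
  assume "anc par x a" "anc par x b"
  then obtain n m where n: "(par ^^ n) x = a" and m: "(par ^^ m) x = b"
    unfolding anc_def by blast
  show ?thesis
  proof (cases "n \<le> m")
    case True
    then have "(par ^^ (m - n)) a = b" using n m
      by (metis comp_apply funpow_add le_add_diff_inverse2)
    then show ?thesis unfolding anc_def by blast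
  next
    case False
    then have "(par ^^ (n - m)) b = a" using n m
      by (metis comp_apply funpow_add le_add_diff_inverse2 nat_le_linear)
    then show ?thesis unfolding anc_def by blast
  qed
qed

definition P where "P x y z \<longleftrightarrow> z \<in> V \<and> anc par x z \<and> anc par y z \<and>
      (\<forall>w\<in>V. anc par x w \<and> anc par y w \<longrightarrow> anc par z w)"

lemma lca_ex: assumes "x \<in> V" "y \<in> V" shows "\<exists>z. P x y z"
proof -
  obtain m where m: "(par ^^ m) x = rt" using reach[OF assms(1)] unfolding anc_def by blast
  define S where "S = {k. anc par y ((par ^^ k) x)}"
  have "m \<in> S" using m reach[OF assms(2)] unfolding S_def by simp
  define k where "k = (LEAST k. k \<in> S)"
  have kS: "k \<in> S" using LeastI[of "\<lambda>k. k \<in> S", OF \<open>m \<in> S\<close>] k_def by simp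
  have "P x y ((par ^^ k) x)"
    unfolding P_def
  proof (intro conjI ballI impI)
    show "(par ^^ k) x \<in> V" using iterV assms by blast
    show "anc par x ((par ^^ k) x)" unfolding anc_def by blast
    show "anc par y ((par ^^ k) x)" using kS unfolding S_def by simp
    fix w assume w: "w \<in> V" "anc par x w \<and> anc par y w"
    then obtain j where j: "(par ^^ j) x = w" unfolding anc_def by blast
    then have "j \<in> S" using w unfolding S_def by simp
    then have "k \<le> j" unfolding k_def by (rule Least_le)
    then have "(par ^^ (j - k)) ((par ^^ k) x) = w" using j
      by (metis comp_apply funpow_add le_add_diff_inverse2)
    then show "anc par ((par ^^ k) x) w" unfolding anc_def by blast
  qed
  then show ?thesis by blast
qed

lemma lca_props: assumes "x \<in> V" "y \<in> V" shows "P x y (lca V par x y)"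
proof -
  obtain z where z: "P x y z" using lca_ex[OF assms] by blast
  have "\<exists>!z. P x y z"
  proof (rule ex1I[of _ z])
    show "P x y z" by (rule z)
    fix z' assume "P x y z'"
    then show "z' = z" using z unfolding P_def by (meson antisym)
  qed
  then show ?thesis unfolding lca_def P_def[symmetric] by (rule theI')
qed

lemma lcaV: "x \<in> V \<Longrightarrow> y \<in> V \<Longrightarrow> lca V par x y \<in> V"
  and lca1: "x \<in> V \<Longrightarrow> y \<in> V \<Longrightarrow> anc par x (lca V par x y)"
  and lca2: "x \<in> V \<Longrightarrow> y \<in> V \<Longrightarrow> anc par y (lca V par x y)"
  and lca_min: "x \<in> V \<Longrightarrow> y \<in> V \<Longrightarrow> anc par x w \<Longrightarrow> anc par y w \<Longrightarrow> anc par (lca V par x y) w"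
  using lca_props[of x y] ancV[of x w] unfolding P_def by auto

lemma lca_sym: "lca V par x y = lca V par y x"
  unfolding lca_def by (simp add: conj_ac)

lemma ultra: assumes "a \<in> V" "b \<in> V" "c \<in> V"
  shows "anc par (lca V par a c) (lca V par a b) \<or> anc par (lca V par a c) (lca V par b c)"
proof -
  have "anc par (lca V par a b) (lca V par b c) \<or> anc par (lca V par b c) (lca V par a b)"
    using chain lca1 lca2 assms by blast
  then show ?thesis
    by (meson anc_trans assms lca1 lca2 lca_min)
qed

lemma leaf_min: "x \<in> leaves V rt par \<Longrightarrow> y \<in> V \<Longrightarrow> anc par y x \<Longrightarrow> y = x"
proof (rule ccontr)
  assume x: "x \<in> leaves V rt par" and y: "y \<in> V" "anc par y x" and ne: "y \<noteq> x"
  then obtain n where n: "(par ^^ n) y = x" unfolding anc_def by blast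
  with ne obtain k where k: "n = Suc k" by (cases n) auto
  define c where "c = (par ^^ k) y"
  have pc: "par c = x" using n k c_def by simp
  have "c \<in> V" using iterV y c_def by blast
  moreover have "c \<noteq> rt" using pc par_rt x unfolding leaves_def by auto
  ultimately have "c \<in> children V rt par x" using pc unfolding children_def by simp
  then show False using x unfolding leaves_def by auto
qed

lemma child_ex: assumes "x \<in> V" "anc par x W" "x \<noteq> W"
  shows "\<exists>c\<in>children V rt par W. anc par x c"
proof -
  have ex: "\<exists>n. (par ^^ n) x = W" using assms unfolding anc_def by blast
  define n0 where "n0 = (LEAST n. (par ^^ n) x = W)"
  have n0: "(par ^^ n0) x = W" using LeastI_ex[OF ex] n0_def by simp
  with assms obtain k where k: "n0 = Suc k" by (cases n0) auto
  define c where "c = (par ^^ k) x"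
  have pc: "par c = W" using n0 k c_def by simp
  have cV: "c \<in> V" using iterV assms c_def by blast
  have "c \<noteq> W"
  proof
    assume "c = W"
    then have "(par ^^ k) x = W" using c_def by simp
    then have "n0 \<le> k" unfolding n0_def by (rule Least_le)
    then show False using k by simp
  qed
  then have "c \<noteq> rt" using pc par_rt by auto
  then have "c \<in> children V rt par W" using pc cV unfolding children_def by simp
  moreover have "anc par x c" unfolding anc_def c_def by blast
  ultimately show ?thesis by blast
qed

end


context rtree begin

lemma path: assumes "\<forall>j. v j \<in> V"
  shows "\<exists>i<Suc m. anc par (lca V par (v 0) (v (Suc m))) (lca V par (v i) (v (Suc i)))"
proof (induction m)
  case 0 then show ?case using anc_refl by auto
next
  case (Suc m)
  then obtain i where i: "i < Suc m" "anc par (lca V par (v 0) (v (Suc m))) (lca V par (v i) (v (Suc i)))"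
    by blast
  have "anc par (lca V par (v 0) (v (Suc (Suc m)))) (lca V par (v 0) (v (Suc m))) \<or>
        anc par (lca V par (v 0) (v (Suc (Suc m)))) (lca V par (v (Suc m)) (v (Suc (Suc m))))"
    using ultra assms by blast
  then show ?case using i anc_trans by (meson less_Suc_eq lessI)
qed

lemma top: assumes "\<forall>j. v j \<in> V"
  shows "\<exists>i<5. \<forall>j<6. anc par (v j) (lca V par (v i) (v (Suc i)))"
proof -
  have "\<forall>j. \<exists>n. (par ^^ n) (v 0) = lca V par (v 0) (v j)"
    using lca1 assms unfolding anc_def by blast
  then obtain f where f: "\<And>j. (par ^^ f j) (v 0) = lca V par (v 0) (v j)" by metis
  define n where "n = Max (f ` {1..<6})"
  obtain k where k: "k \<in> {1..<6}" "f k = n"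
  proof -
    have "n \<in> f ` {1..<6}" unfolding n_def by (rule Max_in) auto
    then show ?thesis using that by blast
  qed
  define W where "W = lca V par (v 0) (v k)"
  have hW: "anc par (lca V par (v 0) (v j)) W" if "j \<in> {1..<6}" for j
  proof -
    have "f j \<le> n" using that n_def by simp
    then have "(par ^^ (n - f j)) ((par ^^ f j) (v 0)) = (par ^^ n) (v 0)"
      by (metis comp_apply funpow_add le_add_diff_inverse2)
    then show ?thesis using f k unfolding W_def anc_def by metis
  qed
  have allW: "anc par (v j) W" if "j < 6" for j
  proof (cases "j = 0")
    case True
    then show ?thesis using hW[of 1] lca1 assms anc_trans by force
  next
    case False
    then show ?thesis using hW[of j] lca2 assms anc_trans that by force
  qed
  obtain m where m: "k = Suc m" using k by (cases k) auto
  obtain i where i: "i < k" "anc par W (lca V par (v i) (v (Suc i)))"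
    using path[OF assms, of m] m W_def by blast
  have "i < 5" "Suc i < 6" using i k by auto
  then have "anc par (lca V par (v i) (v (Suc i))) W"
    using lca_min[of "v i" "v (Suc i)" W] assms allW[of i] allW[of "Suc i"] by simp
  then have "lca V par (v i) (v (Suc i)) = W"
    using antisym i(2) lcaV assms by blast
  then show ?thesis using allW \<open>i < 5\<close> by auto
qed

end

locale btree = rtree +
  assumes planted: "planted_phylo_tree V rt par"
    and bin: "\<forall>v\<in>inner_vertices V rt par. card (children V rt par v) = 2"
begin

lemma leavesV: "x \<in> leaves V rt par \<Longrightarrow> x \<in> V"
  unfolding leaves_def by auto

lemma no_triple:
  assumes L: "p \<in> leaves V rt par" "q \<in> leaves V rt par" "p' \<in> leaves V rt par"
    and d: "p \<noteq> q" "p \<noteq> p'" "q \<noteq> p'"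
    and e: "lca V par p q = W" "lca V par p' q = W" "lca V par p p' = W"
  shows False
proof -
  have V: "p \<in> V" "q \<in> V" "p' \<in> V" using L leavesV by auto
  have WV: "W \<in> V" using e lcaV V by blast
  have a: "anc par p W" "anc par q W" "anc par p' W" using e lca1 lca2 V by metis+
  have nW: "p \<noteq> W" "q \<noteq> W" "p' \<noteq> W"
    using leaf_min L V a d by metis+
  obtain cp where cp: "cp \<in> children V rt par W" "anc par p cp" using child_ex V a nW by meson
  obtain cq where cq: "cq \<in> children V rt par W" "anc par q cq" using child_ex V a nW by meson
  obtain cp' where cp': "cp' \<in> children V rt par W" "anc par p' cp'" using child_ex V a nW by meson
  have sep: "c1 \<noteq> c2" if "c1 \<in> children V rt par W" "anc par x c1" "anc par y c2"
    "lca V par x y = W" "x \<in> V" "y \<in> V" for c1 c2 x y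
  proof
    assume "c1 = c2"
    then have "anc par W c1" using lca_min that by metis
    moreover have "c1 \<in> V" "c1 \<noteq> rt" "par c1 = W"
      using that unfolding children_def by auto
    moreover have "anc par c1 W" using anc_par[of c1] \<open>par c1 = W\<close> by simp
    ultimately have "c1 = W" using antisym by blast
    then show False using fix_rt \<open>c1 \<in> V\<close> \<open>c1 \<noteq> rt\<close> \<open>par c1 = W\<close> by auto
  qed
  have "cp \<noteq> cq" using sep[OF cp cq(2)] e V by blast
  moreover have "cp \<noteq> cp'" using sep[OF cp cp'(2)] e V by blast
  moreover have "cq \<noteq> cp'" using sep[OF cq cp'(2)] e V lca_sym by metis
  ultimately have c3: "card {cp, cq, cp'} = 3" by simp
  have fin: "finite (children V rt par W)" using finV unfolding children_def by simp
  have "card {cp, cq, cp'} \<le> card (children V rt par W)"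
    using cp cq cp' fin by (intro card_mono) auto
  then have ge3: "card (children V rt par W) \<ge> 3" using c3 by simp
  have "W \<noteq> rt" using ge3 planted unfolding planted_phylo_tree_def by auto
  moreover have "W \<notin> leaves V rt par" using cp unfolding leaves_def by auto
  ultimately have "W \<in> inner_vertices V rt par" using WV unfolding inner_vertices_def by simp
  then show False using bin ge3 by auto
qed

lemma key:
  assumes L: "p \<in> leaves V rt par" "q \<in> leaves V rt par" "p' \<in> leaves V rt par"
    and d: "p \<noteq> q" "p \<noteq> p'" "q \<noteq> p'"
    and col: "\<sigma> p' = \<sigma> p"
    and E: "rbmg_edge V rt par \<sigma> p q"
    and below: "anc par p' (lca V par p q)"
  shows "rbmg_edge V rt par \<sigma> p' q"
proof -
  define W where "W = lca V par p q"
  have V: "p \<in> V" "q \<in> V" "p' \<in> V" using L leavesV by auto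
  have bm1: "best_match V rt par \<sigma> p q" and bm2: "best_match V rt par \<sigma> q p"
    using E unfolding rbmg_edge_def by auto
  have "anc par (lca V par q p) (lca V par q p')"
    using bm2 L col unfolding best_match_def by auto
  then have a1: "anc par W (lca V par q p')" using lca_sym W_def by metis
  have "anc par (lca V par q p') W"
    using lca_min V below W_def lca2 by metis
  then have qp': "lca V par q p' = W" using antisym lcaV V a1 by blast
  then have pq': "lca V par p' q = W" using lca_sym by metis
  have npp: "lca V par p p' \<noteq> W"
    using no_triple[OF L d W_def[symmetric] pq'] by blast
  have "best_match V rt par \<sigma> p' q"
    unfolding best_match_def
  proof (intro conjI ballI impI)
    show "p' \<in> leaves V rt par" "q \<in> leaves V rt par" by fact+
    show "\<sigma> p' \<noteq> \<sigma> q" using bm1 col unfolding best_match_def by auto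
    fix y' assume y': "y' \<in> leaves V rt par" "\<sigma> y' = \<sigma> q"
    then have yV: "y' \<in> V" using leavesV by auto
    have h: "anc par W (lca V par p y')" using bm1 y' W_def unfolding best_match_def by auto
    have "anc par (lca V par p y') (lca V par p p') \<or> anc par (lca V par p y') (lca V par p' y')"
      using ultra V yV by blast
    then show "anc par (lca V par p' q) (lca V par p' y')"
    proof
      assume "anc par (lca V par p y') (lca V par p p')"
      then have "anc par W (lca V par p p')" using h anc_trans by blast
      moreover have "anc par (lca V par p p') W"
        using lca_min V below W_def lca1 by metis
      ultimately have "lca V par p p' = W" using antisym lcaV V by blast
      then show ?thesis using npp by blast
    next
      assume "anc par (lca V par p y') (lca V par p' y')"
      then show ?thesis using h anc_trans pq' by metis
    qed
  qed
  moreover have "best_match V rt par \<sigma> q p'"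
    using bm2 col L qp' lca_sym W_def unfolding best_match_def by metis
  ultimately show ?thesis unfolding rbmg_edge_def by simp
qed

end


lemma tri: "a \<in> {r, s, t} \<Longrightarrow> b \<in> {r, s, t} \<Longrightarrow> c \<in> {r, s, t} \<Longrightarrow> d \<in> {r, s, t} \<Longrightarrow>
  a \<noteq> b \<Longrightarrow> a \<noteq> c \<Longrightarrow> b \<noteq> c \<Longrightarrow> b \<noteq> d \<Longrightarrow> c \<noteq> d \<Longrightarrow> d = a"
  by auto

lemma color_period:
  fixes \<sigma> :: "'v \<Rightarrow> 'c" and v :: "nat \<Rightarrow> 'v"
  assumes c: "\<forall>i<6. \<sigma> (v i) \<noteq> \<sigma> (v ((i + 1) mod 6)) \<and> \<sigma> (v i) \<noteq> \<sigma> (v ((i + 2) mod 6)) \<and>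
            \<sigma> (v ((i + 1) mod 6)) \<noteq> \<sigma> (v ((i + 2) mod 6))"
    and r: "\<forall>i<6. \<sigma> (v i) \<in> {r, s, t}"
    and i: "i < 5"
  shows "\<sigma> (v ((i + 3) mod 6)) = \<sigma> (v i)"
proof -
  have "i = 0 \<or> i = 1 \<or> i = 2 \<or> i = 3 \<or> i = 4" using i by arith
  then show ?thesis
  proof (elim disjE)
    assume ik: "i = 0"
    have A: "\<sigma> (v 0) \<noteq> \<sigma> (v 1) \<and> \<sigma> (v 0) \<noteq> \<sigma> (v 2) \<and> \<sigma> (v 1) \<noteq> \<sigma> (v 2)"
      proof -
        have m: "(0 + 1) mod 6 = (1::nat)" "(0 + 2) mod 6 = (2::nat)" by simp_all
        have "(0::nat) < 6" by simp
        from c[rule_format, OF this, unfolded m] show ?thesis by blast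
      qed
    have B: "\<sigma> (v 1) \<noteq> \<sigma> (v 2) \<and> \<sigma> (v 1) \<noteq> \<sigma> (v 3) \<and> \<sigma> (v 2) \<noteq> \<sigma> (v 3)"
      proof -
        have m: "(1 + 1) mod 6 = (2::nat)" "(1 + 2) mod 6 = (3::nat)" by simp_all
        have "(1::nat) < 6" by simp
        from c[rule_format, OF this, unfolded m] show ?thesis by blast
      qed
    have "\<sigma> (v 3) = \<sigma> (v 0)"
      by (rule tri[OF r[rule_format, of 0] r[rule_format, of 1] r[rule_format, of 2] r[rule_format, of 3]])
        (use A B in simp_all)
    then show ?thesis using ik by simp
  next
    assume ik: "i = 1"
    have A: "\<sigma> (v 1) \<noteq> \<sigma> (v 2) \<and> \<sigma> (v 1) \<noteq> \<sigma> (v 3) \<and> \<sigma> (v 2) \<noteq> \<sigma> (v 3)"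
      proof -
        have m: "(1 + 1) mod 6 = (2::nat)" "(1 + 2) mod 6 = (3::nat)" by simp_all
        have "(1::nat) < 6" by simp
        from c[rule_format, OF this, unfolded m] show ?thesis by blast
      qed
    have B: "\<sigma> (v 2) \<noteq> \<sigma> (v 3) \<and> \<sigma> (v 2) \<noteq> \<sigma> (v 4) \<and> \<sigma> (v 3) \<noteq> \<sigma> (v 4)"
      proof -
        have m: "(2 + 1) mod 6 = (3::nat)" "(2 + 2) mod 6 = (4::nat)" by simp_all
        have "(2::nat) < 6" by simp
        from c[rule_format, OF this, unfolded m] show ?thesis by blast
      qed
    have "\<sigma> (v 4) = \<sigma> (v 1)"
      by (rule tri[OF r[rule_format, of 1] r[rule_format, of 2] r[rule_format, of 3] r[rule_format, of 4]])
        (use A B in simp_all)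
    then show ?thesis using ik by simp
  next
    assume ik: "i = 2"
    have A: "\<sigma> (v 2) \<noteq> \<sigma> (v 3) \<and> \<sigma> (v 2) \<noteq> \<sigma> (v 4) \<and> \<sigma> (v 3) \<noteq> \<sigma> (v 4)"
      proof -
        have m: "(2 + 1) mod 6 = (3::nat)" "(2 + 2) mod 6 = (4::nat)" by simp_all
        have "(2::nat) < 6" by simp
        from c[rule_format, OF this, unfolded m] show ?thesis by blast
      qed
    have B: "\<sigma> (v 3) \<noteq> \<sigma> (v 4) \<and> \<sigma> (v 3) \<noteq> \<sigma> (v 5) \<and> \<sigma> (v 4) \<noteq> \<sigma> (v 5)"
      proof -
        have m: "(3 + 1) mod 6 = (4::nat)" "(3 + 2) mod 6 = (5::nat)" by simp_all
        have "(3::nat) < 6" by simp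
        from c[rule_format, OF this, unfolded m] show ?thesis by blast
      qed
    have "\<sigma> (v 5) = \<sigma> (v 2)"
      by (rule tri[OF r[rule_format, of 2] r[rule_format, of 3] r[rule_format, of 4] r[rule_format, of 5]])
        (use A B in simp_all)
    then show ?thesis using ik by simp
  next
    assume ik: "i = 3"
    have A: "\<sigma> (v 3) \<noteq> \<sigma> (v 4) \<and> \<sigma> (v 3) \<noteq> \<sigma> (v 5) \<and> \<sigma> (v 4) \<noteq> \<sigma> (v 5)"
      proof -
        have m: "(3 + 1) mod 6 = (4::nat)" "(3 + 2) mod 6 = (5::nat)" by simp_all
        have "(3::nat) < 6" by simp
        from c[rule_format, OF this, unfolded m] show ?thesis by blast
      qed
    have B: "\<sigma> (v 4) \<noteq> \<sigma> (v 5) \<and> \<sigma> (v 4) \<noteq> \<sigma> (v 0) \<and> \<sigma> (v 5) \<noteq> \<sigma> (v 0)"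
      proof -
        have m: "(4 + 1) mod 6 = (5::nat)" "(4 + 2) mod 6 = (0::nat)" by simp_all
        have "(4::nat) < 6" by simp
        from c[rule_format, OF this, unfolded m] show ?thesis by blast
      qed
    have "\<sigma> (v 0) = \<sigma> (v 3)"
      by (rule tri[OF r[rule_format, of 3] r[rule_format, of 4] r[rule_format, of 5] r[rule_format, of 0]])
        (use A B in simp_all)
    then show ?thesis using ik by simp
  next
    assume ik: "i = 4"
    have A: "\<sigma> (v 4) \<noteq> \<sigma> (v 5) \<and> \<sigma> (v 4) \<noteq> \<sigma> (v 0) \<and> \<sigma> (v 5) \<noteq> \<sigma> (v 0)"
      proof -
        have m: "(4 + 1) mod 6 = (5::nat)" "(4 + 2) mod 6 = (0::nat)" by simp_all
        have "(4::nat) < 6" by simp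
        from c[rule_format, OF this, unfolded m] show ?thesis by blast
      qed
    have B: "\<sigma> (v 5) \<noteq> \<sigma> (v 0) \<and> \<sigma> (v 5) \<noteq> \<sigma> (v 1) \<and> \<sigma> (v 0) \<noteq> \<sigma> (v 1)"
      proof -
        have m: "(5 + 1) mod 6 = (0::nat)" "(5 + 2) mod 6 = (1::nat)" by simp_all
        have "(5::nat) < 6" by simp
        from c[rule_format, OF this, unfolded m] show ?thesis by blast
      qed
    have "\<sigma> (v 1) = \<sigma> (v 4)"
      by (rule tri[OF r[rule_format, of 4] r[rule_format, of 5] r[rule_format, of 0] r[rule_format, of 1]])
        (use A B in simp_all)
    then show ?thesis using ik by simp
  qed
qed

lemma comp_sub: "x \<in> H \<Longrightarrow> y \<in> component E H x \<Longrightarrow> y \<in> H"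
  unfolding component_def by (auto elim: rtranclE)

theorem mainTheorem19:
  fixes V :: "'v set" and rt :: 'v and par :: "'v \<Rightarrow> 'v" and \<sigma> :: "'v \<Rightarrow> 'c"
    and r s t :: 'c
  assumes "planted_phylo_tree V rt par"
    and "\<forall>v\<in>inner_vertices V rt par. card (children V rt par v) = 2"
    and "r \<noteq> s" and "r \<noteq> t" and "s \<noteq> t"
  shows "\<not> (\<exists>C. is_component (rbmg_edge V rt par \<sigma>) (col_verts V rt par \<sigma> {r, s, t}) C \<and>
               typeC (rbmg_edge V rt par \<sigma>) \<sigma> C)"
proof
  assume "\<exists>C. is_component (rbmg_edge V rt par \<sigma>) (col_verts V rt par \<sigma> {r, s, t}) C \<and>
               typeC (rbmg_edge V rt par \<sigma>) \<sigma> C"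
  then obtain C where comp: "is_component (rbmg_edge V rt par \<sigma>) (col_verts V rt par \<sigma> {r, s, t}) C"
    and tc: "typeC (rbmg_edge V rt par \<sigma>) \<sigma> C" by blast
  let ?H = "col_verts V rt par \<sigma> {r, s, t}"
  let ?E = "rbmg_edge V rt par \<sigma>"
  obtain x where x: "x \<in> ?H" "C = component ?E ?H x" using comp unfolding is_component_def by blast
  obtain v :: "nat \<Rightarrow> 'v" where vC: "\<forall>i<6. v i \<in> C" and inj: "inj_on v {0..<6}"
    and ed: "\<forall>i<6. \<forall>j<6. ?E (v i) (v j) \<longleftrightarrow> (j = (i + 1) mod 6 \<or> i = (j + 1) mod 6)"
    and co: "\<forall>i<6. \<sigma> (v i) \<noteq> \<sigma> (v ((i + 1) mod 6)) \<and> \<sigma> (v i) \<noteq> \<sigma> (v ((i + 2) mod 6)) \<and>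
            \<sigma> (v ((i + 1) mod 6)) \<noteq> \<sigma> (v ((i + 2) mod 6))"
    using tc unfolding typeC_def by blast
  have vH: "v j \<in> ?H" if "j < 6" for j
    using comp_sub[OF x(1)] vC[rule_format, OF that] x(2) by simp
  then have vL: "v j \<in> leaves V rt par" and vc: "\<sigma> (v j) \<in> {r, s, t}" if "j < 6" for j
    using that unfolding col_verts_def by auto
  have rtr: "rooted_tree V rt par" using assms(1) unfolding planted_phylo_tree_def by simp
  interpret btree V rt par
    by (rule btree.intro[OF rtree.intro[OF rtr] btree_axioms.intro[OF assms(1) assms(2)]])
  define w where "w j = (if j < 6 then v j else rt)" for j
  have wV: "\<forall>j. w j \<in> V" using vL leavesV rtV unfolding w_def by auto
  obtain i where i: "i < 5" "\<forall>j<6. anc par (w j) (lca V par (w i) (w (Suc i)))"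
    using top[OF wV] by blast
  have i': "\<forall>j<6. anc par (v j) (lca V par (v i) (v (Suc i)))"
    using i unfolding w_def by auto
  let ?p' = "(i + 3) mod 6"
  have ne: "i \<noteq> Suc i" "i \<noteq> ?p'" "Suc i \<noteq> ?p'" using i(1) by presburger+
  have lt: "i < 6" "Suc i < 6" "?p' < 6" using i(1) by auto
  have dist: "v i \<noteq> v (Suc i)" "v i \<noteq> v ?p'" "v (Suc i) \<noteq> v ?p'"
    using inj ne lt unfolding inj_on_def by (metis atLeastLessThan_iff zero_le)+
  have e: "?E (v i) (v (Suc i))" using ed[rule_format, OF lt(1) lt(2)] i(1) by simp
  have "?E (v ?p') (v (Suc i))"
    using key[OF vL[OF lt(1)] vL[OF lt(2)] vL[OF lt(3)] dist
        color_period[of \<sigma> v r s t i, OF co _ i(1)] e i'[rule_format, OF lt(3)]] vc by blast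
  moreover have "\<not> (Suc i = (?p' + 1) mod 6 \<or> ?p' = (Suc i + 1) mod 6)"
  proof -
    have "i = 0 \<or> i = 1 \<or> i = 2 \<or> i = 3 \<or> i = 4" using i(1) by arith
    then show ?thesis by (elim disjE) simp_all
  qed
  ultimately show False using ed[rule_format, OF lt(3) lt(2)] by blast
qed

end
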